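(* Let $V\in{}_B\mathrm{Rep}^A$ and $W\in{}_A\mathrm{Rep}^C$. Then there is a unitary (inner-product preserving, bijective) isomorphism of unitary DK-representations between ${}_V\mathrm{Ind}(W)$ and $\mathrm{Ind}^W(V)$, both equipped with the tensor product inner product on $V\odot W$.
   Context: $A$ is a CQG Hopf $*$-algebra: a complex Hopf algebra $(A,\Delta_A,\varepsilon_A,S_A)$ with an anti-linear involution making it a $*$-algebra with $\Delta_A$ a $*$-homomorphism, admitting a state $\Phi_A$ with $(\Phi_A\otimes\mathrm{id})\Delta_A(a)=\Phi_A(a)1=(\mathrm{id}\otimes\Phi_A)\Delta_A(a)$. Put $a^\dagger=S_A(a)^*$. $B\subseteq A$ is a unital right coideal $*$-subalgebra ($\Delta_A(B)\subseteq B\odot A$). Let $B_+=B\cap\ker\varepsilon_A$, $C=A/AB_+$ with quotient map $\pi_C$; $C$ is a coalgebra (comultiplication induced by $\Delta_A$), a left $A$-module via $a\cdot\pi_C(a')=\pi_C(aa')$, with anti-linear involution $\pi_C(a)^\dagger=\pi_C(a^\dagger)$. Sweedler notation is used. For $(X,Y)\in\{(B,A),(A,C),(B,C)\}$, ${}_X\mathrm{Mod}^Y$ is the category of left $X$-modules $V$ with a right $Y$-comodule structure $v\mapsto v_{(0)}\otimes v_{(1)}$ such that $(xv)_{(0)}\otimes(xv)_{(1)}=x_{(1)}v_{(0)}\otimes x_{(2)}v_{(1)}$. ${}_X\mathrm{Rep}^Y$ consists of those $V$ which are pre-Hilbert spaces with $\langle v,xw\rangle=\langle x^*v,w\rangle$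 and $\langle v,w_{(0)}\rangle w_{(1)}=\langle v_{(0)},w\rangle v_{(1)}^\dagger$ for all $v,w\in V$, $x\in X$. ${}_V\mathrm{Ind}(W)$: $V\odot W$ with $b(v\otimes w)=bv\otimes w$ and coaction $v\otimes w\mapsto v_{(0)}\otimes w_{(0)}\otimes v_{(1)}w_{(1)}$. $\mathrm{Ind}^W(V)$: $V\odot W$ with $b(v\otimes w)=b_{(1)}v\otimes b_{(2)}w$ and coaction $v\otimes w\mapsto v\otimes w_{(0)}\otimes w_{(1)}$. Both are in ${}_B\mathrm{Rep}^C$ with the tensor product inner product. *)

theory Defs
  imports Complex_Main
begin

class cvec = ab_group_add +
  fixes cscale :: "complex \<Rightarrow> 'a \<Rightarrow> 'a"
  assumes cscale_right_distrib: "cscale c (x + y) = cscale c x + cscale c y"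
    and cscale_left_distrib: "cscale (c + d) x = cscale c x + cscale d x"
    and cscale_cscale: "cscale c (cscale d x) = cscale (c * d) x"
    and cscale_one: "cscale 1 x = x"

class calg = cvec + ring_1 +
  assumes cscale_mult_left: "cscale c (x * y) = cscale c x * y"
    and cscale_mult_right: "cscale c (x * y) = x * cscale c y"

instantiation complex :: calg
begin
definition cscale_complex :: "complex \<Rightarrow> complex \<Rightarrow> complex" where
  "cscale_complex c x = c * x"
instance by standard (simp_all add: cscale_complex_def algebra_simps)
end

definition clinear :: "('a::cvec \<Rightarrow> 'b::cvec) \<Rightarrow> bool" where
  "clinear f \<longleftrightarrow> (\<forall>x y. f (x + y) = f x + f y) \<and> (\<forall>c x. f (cscale c x) = cscale c (f x))"

definition antilinear :: "('a::cvec \<Rightarrow> 'b::cvec) \<Rightarrow> bool" where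
  "antilinear f \<longleftrightarrow> (\<forall>x y. f (x + y) = f x + f y) \<and> (\<forall>c x. f (cscale c x) = cscale (cnj c) (f x))"

definition cbilinear :: "('a::cvec \<Rightarrow> 'b::cvec \<Rightarrow> complex) \<Rightarrow> bool" where
  "cbilinear \<beta> \<longleftrightarrow> (\<forall>y. clinear (\<lambda>x. \<beta> x y)) \<and> (\<forall>x. clinear (\<beta> x))"

definition ctrilinear :: "('a::cvec \<Rightarrow> 'b::cvec \<Rightarrow> 'c::cvec \<Rightarrow> complex) \<Rightarrow> bool" where
  "ctrilinear \<gamma> \<longleftrightarrow> (\<forall>y z. clinear (\<lambda>x. \<gamma> x y z)) \<and> (\<forall>x z. clinear (\<lambda>y. \<gamma> x y z))
                      \<and> (\<forall>x y. clinear (\<gamma> x y))"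

section \<open>Algebraic tensor products\<close>

text \<open>The algebraic tensor product V \<odot> W is represented through its embedding into the
  algebraic dual of the space of bilinear forms on V \<times> W: the elementary tensor v \<otimes> w is
  the evaluation functional at (v,w).  A functional is a tensor if, on bilinear forms, it agrees
  with a finite sum of elementary tensors; two tensors are equal iff they agree on all bilinear
  forms.  Three-fold tensors are handled in the same way via trilinear forms.
  Sweedler notation  x_(1) \<otimes> x_(2)  corresponds to  Delta x (\<lambda>x1 x2. ...).\<close>

type_synonym ('v, 'w) tens = "('v \<Rightarrow> 'w \<Rightarrow> complex) \<Rightarrow> complex"
type_synonym ('u, 'v, 'w) tens3 = "('u \<Rightarrow> 'v \<Rightarrow> 'w \<Rightarrow> complex) \<Rightarrow> complex"

definition tens :: "'v \<Rightarrow> 'w \<Rightarrow> ('v, 'w) tens" where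
  "tens v w = (\<lambda>\<beta>. \<beta> v w)"

definition is_tensor :: "('v::cvec, 'w::cvec) tens \<Rightarrow> bool" where
  "is_tensor t \<longleftrightarrow> (\<exists>xs :: ('v \<times> 'w) list. \<forall>\<beta>. cbilinear \<beta> \<longrightarrow> t \<beta> = (\<Sum>(x, y)\<leftarrow>xs. \<beta> x y))"

definition teq :: "('v::cvec, 'w::cvec) tens \<Rightarrow> ('v, 'w) tens \<Rightarrow> bool" where
  "teq t s \<longleftrightarrow> (\<forall>\<beta>. cbilinear \<beta> \<longrightarrow> t \<beta> = s \<beta>)"

definition teq3 :: "('u::cvec, 'v::cvec, 'w::cvec) tens3 \<Rightarrow> ('u, 'v, 'w) tens3 \<Rightarrow> bool" where
  "teq3 t s \<longleftrightarrow> (\<forall>\<gamma>. ctrilinear \<gamma> \<longrightarrow> t \<gamma> = s \<gamma>)"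

definition tadd :: "('v, 'w) tens \<Rightarrow> ('v, 'w) tens \<Rightarrow> ('v, 'w) tens" where
  "tadd t s = (\<lambda>\<beta>. t \<beta> + s \<beta>)"

definition tscale :: "complex \<Rightarrow> ('v, 'w) tens \<Rightarrow> ('v, 'w) tens" where
  "tscale c t = (\<lambda>\<beta>. c * t \<beta>)"

definition tlinear :: "('x::cvec \<Rightarrow> ('v::cvec, 'w::cvec) tens) \<Rightarrow> bool" where
  "tlinear d \<longleftrightarrow> (\<forall>x. is_tensor (d x))
     \<and> (\<forall>x y \<beta>. cbilinear \<beta> \<longrightarrow> d (x + y) \<beta> = d x \<beta> + d y \<beta>)
     \<and> (\<forall>c x \<beta>. cbilinear \<beta> \<longrightarrow> d (cscale c x) \<beta> = c * d x \<beta>)"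

section \<open>CQG Hopf *-algebras\<close>

definition star_involution :: "('a::calg \<Rightarrow> 'a) \<Rightarrow> bool" where
  "star_involution st \<longleftrightarrow> antilinear st \<and> (\<forall>x. st (st x) = x) \<and> (\<forall>x y. st (x * y) = st y * st x)"

definition hopf_star_algebra ::
  "('a::calg \<Rightarrow> ('a, 'a) tens) \<Rightarrow> ('a \<Rightarrow> complex) \<Rightarrow> ('a \<Rightarrow> 'a) \<Rightarrow> ('a \<Rightarrow> 'a) \<Rightarrow> bool" where
  "hopf_star_algebra \<Delta> \<epsilon> S st \<longleftrightarrow>
     tlinear \<Delta>
   \<and> (\<forall>x y \<beta>. cbilinear \<beta> \<longrightarrow> \<Delta> (x * y) \<beta> = \<Delta> x (\<lambda>x1 x2. \<Delta> y (\<lambda>y1 y2. \<beta> (x1 * y1) (x2 * y2))))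
   \<and> (\<forall>\<beta>. cbilinear \<beta> \<longrightarrow> \<Delta> 1 \<beta> = \<beta> 1 1)
   \<and> (\<forall>x \<gamma>. ctrilinear \<gamma> \<longrightarrow>
        \<Delta> x (\<lambda>x1 x2. \<Delta> x1 (\<lambda>p q. \<gamma> p q x2)) = \<Delta> x (\<lambda>x1 x2. \<Delta> x2 (\<lambda>p q. \<gamma> x1 p q)))
   \<and> clinear \<epsilon> \<and> (\<forall>x y. \<epsilon> (x * y) = \<epsilon> x * \<epsilon> y) \<and> \<epsilon> 1 = 1
   \<and> (\<forall>x \<psi>. clinear (\<psi> :: 'a \<Rightarrow> complex) \<longrightarrow>
        \<Delta> x (\<lambda>x1 x2. \<epsilon> x1 * \<psi> x2) = \<psi> x \<and> \<Delta> x (\<lambda>x1 x2. \<psi> x1 * \<epsilon> x2) = \<psi> x)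
   \<and> clinear S
   \<and> (\<forall>x \<psi>. clinear (\<psi> :: 'a \<Rightarrow> complex) \<longrightarrow>
        \<Delta> x (\<lambda>x1 x2. \<psi> (S x1 * x2)) = \<epsilon> x * \<psi> 1 \<and> \<Delta> x (\<lambda>x1 x2. \<psi> (x1 * S x2)) = \<epsilon> x * \<psi> 1)
   \<and> star_involution st
   \<and> (\<forall>x \<beta>. cbilinear \<beta> \<longrightarrow> \<Delta> (st x) \<beta> = cnj (\<Delta> x (\<lambda>x1 x2. cnj (\<beta> (st x1) (st x2)))))"

definition haar_state ::
  "('a::calg \<Rightarrow> ('a, 'a) tens) \<Rightarrow> ('a \<Rightarrow> 'a) \<Rightarrow> ('a \<Rightarrow> complex) \<Rightarrow> bool" where
  "haar_state \<Delta> st \<Phi> \<longleftrightarrow> clinear \<Phi> \<and> \<Phi> 1 = 1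
   \<and> (\<forall>x. Im (\<Phi> (st x * x)) = 0 \<and> 0 \<le> Re (\<Phi> (st x * x)))
   \<and> (\<forall>x \<psi>. clinear (\<psi> :: 'a \<Rightarrow> complex) \<longrightarrow>
        \<Delta> x (\<lambda>x1 x2. \<Phi> x1 * \<psi> x2) = \<Phi> x * \<psi> 1 \<and> \<Delta> x (\<lambda>x1 x2. \<psi> x1 * \<Phi> x2) = \<Phi> x * \<psi> 1)"

definition cqg_hopf_star_algebra ::
  "('a::calg \<Rightarrow> ('a, 'a) tens) \<Rightarrow> ('a \<Rightarrow> complex) \<Rightarrow> ('a \<Rightarrow> 'a) \<Rightarrow> ('a \<Rightarrow> 'a) \<Rightarrow> bool" where
  "cqg_hopf_star_algebra \<Delta> \<epsilon> S st \<longleftrightarrow> hopf_star_algebra \<Delta> \<epsilon> S st \<and> (\<exists>\<Phi>. haar_state \<Delta> st \<Phi>)"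

section \<open>Right coideal *-subalgebras and the quotient coalgebra C = A / A B_+\<close>

text \<open>B is given as a complex algebra together with an injective unital algebra
  homomorphism iota into A, closed under star (starB), whose image is a right coideal:
  Delta(iota b) = (iota \<otimes> id)(deltaB b) with deltaB b \<in> B \<odot> A.\<close>
definition right_coideal_star_subalg ::
  "('a::calg \<Rightarrow> ('a, 'a) tens) \<Rightarrow> ('a \<Rightarrow> 'a) \<Rightarrow> ('b::calg \<Rightarrow> 'a) \<Rightarrow> ('b \<Rightarrow> 'b)
   \<Rightarrow> ('b \<Rightarrow> ('b, 'a) tens) \<Rightarrow> bool" where
  "right_coideal_star_subalg \<Delta> st \<iota> stB \<delta>B \<longleftrightarrow>
     inj \<iota> \<and> clinear \<iota> \<and> (\<forall>x y. \<iota> (x * y) = \<iota> x * \<iota> y) \<and> \<iota> 1 = 1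
   \<and> (\<forall>b. \<iota> (stB b) = st (\<iota> b))
   \<and> (\<forall>b. is_tensor (\<delta>B b))
   \<and> (\<forall>b \<beta>. cbilinear \<beta> \<longrightarrow> \<delta>B b (\<lambda>x y. \<beta> (\<iota> x) y) = \<Delta> (\<iota> b) \<beta>)"

definition ABplus :: "('a::calg \<Rightarrow> complex) \<Rightarrow> ('b \<Rightarrow> 'a) \<Rightarrow> 'a set" where
  "ABplus \<epsilon> \<iota> = {z. \<exists>ps :: ('a \<times> 'b) list.
       (\<forall>(a, b) \<in> set ps. \<epsilon> (\<iota> b) = 0) \<and> z = (\<Sum>(a, b)\<leftarrow>ps. a * \<iota> b)}"

text \<open>C is given as a space with a surjective linear map piC : A \<rightarrow> C with kernel A B_+,
  together with the structures induced from A (comultiplication, counit, left A-action,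
  anti-linear involution).\<close>
definition quotient_coalgebra ::
  "('a::calg \<Rightarrow> ('a, 'a) tens) \<Rightarrow> ('a \<Rightarrow> complex) \<Rightarrow> ('a \<Rightarrow> 'a) \<Rightarrow> ('a \<Rightarrow> 'a) \<Rightarrow> ('b \<Rightarrow> 'a)
   \<Rightarrow> ('a \<Rightarrow> 'c::cvec) \<Rightarrow> ('c \<Rightarrow> ('c, 'c) tens) \<Rightarrow> ('c \<Rightarrow> complex) \<Rightarrow> ('a \<Rightarrow> 'c \<Rightarrow> 'c) \<Rightarrow> ('c \<Rightarrow> 'c)
   \<Rightarrow> bool" where
  "quotient_coalgebra \<Delta> \<epsilon> S st \<iota> \<pi> \<Delta>C \<epsilon>C actC dagC \<longleftrightarrow>
     clinear \<pi> \<and> surj \<pi> \<and> (\<forall>x. \<pi> x = 0 \<longleftrightarrow> x \<in> ABplus \<epsilon> \<iota>)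
   \<and> (\<forall>x \<beta>. cbilinear \<beta> \<longrightarrow> \<Delta>C (\<pi> x) \<beta> = \<Delta> x (\<lambda>x1 x2. \<beta> (\<pi> x1) (\<pi> x2)))
   \<and> (\<forall>x. is_tensor (\<Delta>C (\<pi> x)))
   \<and> (\<forall>x. \<epsilon>C (\<pi> x) = \<epsilon> x)
   \<and> (\<forall>a x. actC a (\<pi> x) = \<pi> (a * x))
   \<and> (\<forall>x. dagC (\<pi> x) = \<pi> (st (S x)))"

definition alg_module :: "('x::calg \<Rightarrow> 'v::cvec \<Rightarrow> 'v) \<Rightarrow> bool" where
  "alg_module act \<longleftrightarrow>
     (\<forall>x x' v. act (x + x') v = act x v + act x' v)
   \<and> (\<forall>c x v. act (cscale c x) v = cscale c (act x v))
   \<and> (\<forall>x v w. act x (v + w) = act x v + act x w)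
   \<and> (\<forall>c x v. act x (cscale c v) = cscale c (act x v))
   \<and> (\<forall>v. act 1 v = v)
   \<and> (\<forall>x x' v. act (x * x') v = act x (act x' v))"

definition comodule :: "('y::cvec \<Rightarrow> ('y, 'y) tens) \<Rightarrow> ('y \<Rightarrow> complex) \<Rightarrow> ('v::cvec \<Rightarrow> ('v, 'y) tens) \<Rightarrow> bool" where
  "comodule \<Delta>Y \<epsilon>Y \<delta> \<longleftrightarrow> tlinear \<delta>
   \<and> (\<forall>v \<gamma>. ctrilinear \<gamma> \<longrightarrow>
        \<delta> v (\<lambda>v0 v1. \<delta> v0 (\<lambda>p q. \<gamma> p q v1)) = \<delta> v (\<lambda>v0 v1. \<Delta>Y v1 (\<lambda>p q. \<gamma> v0 p q)))
   \<and> (\<forall>v \<psi>. clinear (\<psi> :: 'v \<Rightarrow> complex) \<longrightarrow> \<delta> v (\<lambda>v0 v1. \<psi> v0 * \<epsilon>Y v1) = \<psi> v)"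

text \<open>Compatibility (xv)_(0) \<otimes> (xv)_(1) = x_(1) v_(0) \<otimes> x_(2) v_(1), where
  dX x = x_(1) \<otimes> x_(2) \<in> X \<odot> A and A acts on Y by actY.\<close>
definition mod_comod_compat ::
  "('x \<Rightarrow> ('x, 'a) tens) \<Rightarrow> ('a \<Rightarrow> 'y \<Rightarrow> 'y) \<Rightarrow> ('x \<Rightarrow> 'v \<Rightarrow> 'v) \<Rightarrow> ('v::cvec \<Rightarrow> ('v, 'y::cvec) tens) \<Rightarrow> bool" where
  "mod_comod_compat dX actY act \<delta> \<longleftrightarrow>
     (\<forall>x v \<beta>. cbilinear \<beta> \<longrightarrow>
        \<delta> (act x v) \<beta> = dX x (\<lambda>x1 x2. \<delta> v (\<lambda>v0 v1. \<beta> (act x1 v0) (actY x2 v1))))"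

text \<open>Pre-Hilbert space: inner product conjugate-linear in the first, linear in the second
  argument, Hermitian, positive definite.\<close>
definition pre_hilbert :: "('v::cvec \<Rightarrow> 'v \<Rightarrow> complex) \<Rightarrow> bool" where
  "pre_hilbert ip \<longleftrightarrow>
     (\<forall>x y z. ip x (y + z) = ip x y + ip x z)
   \<and> (\<forall>c x y. ip x (cscale c y) = c * ip x y)
   \<and> (\<forall>x y. ip y x = cnj (ip x y))
   \<and> (\<forall>x. Im (ip x x) = 0 \<and> 0 \<le> Re (ip x x))
   \<and> (\<forall>x. ip x x = 0 \<longrightarrow> x = 0)"

text \<open>The unitarity conditions: \<langle>v, x w\<rangle> = \<langle>x* v, w\<rangle> and
  \<langle>v, w_(0)\<rangle> w_(1) = \<langle>v_(0), w\<rangle> v_(1)^\<dagger> (an identity in Y, tested against all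
  linear functionals psi on Y).\<close>
definition rep_compat ::
  "('x \<Rightarrow> 'x) \<Rightarrow> ('y::cvec \<Rightarrow> 'y) \<Rightarrow> ('v::cvec \<Rightarrow> 'v \<Rightarrow> complex) \<Rightarrow> ('x \<Rightarrow> 'v \<Rightarrow> 'v)
   \<Rightarrow> ('v \<Rightarrow> ('v, 'y) tens) \<Rightarrow> bool" where
  "rep_compat stX dagY ip act \<delta> \<longleftrightarrow>
     (\<forall>x v w. ip v (act x w) = ip (act (stX x) v) w)
   \<and> (\<forall>v w \<psi>. clinear (\<psi> :: 'y \<Rightarrow> complex) \<longrightarrow>
        \<delta> w (\<lambda>w0 w1. ip v w0 * \<psi> w1) = cnj (\<delta> v (\<lambda>v0 v1. cnj (ip v0 w * \<psi> (dagY v1)))))"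

definition B_Rep_A ::
  "('a::calg \<Rightarrow> ('a, 'a) tens) \<Rightarrow> ('a \<Rightarrow> complex) \<Rightarrow> ('a \<Rightarrow> 'a) \<Rightarrow> ('a \<Rightarrow> 'a)
   \<Rightarrow> ('b::calg \<Rightarrow> 'b) \<Rightarrow> ('b \<Rightarrow> ('b, 'a) tens)
   \<Rightarrow> ('v::cvec \<Rightarrow> 'v \<Rightarrow> complex) \<Rightarrow> ('b \<Rightarrow> 'v \<Rightarrow> 'v) \<Rightarrow> ('v \<Rightarrow> ('v, 'a) tens) \<Rightarrow> bool" where
  "B_Rep_A \<Delta> \<epsilon> S st stB \<delta>B ip act \<delta> \<longleftrightarrow>
     pre_hilbert ip \<and> alg_module act \<and> comodule \<Delta> \<epsilon> \<delta>
   \<and> mod_comod_compat \<delta>B (\<lambda>a y. a * y) act \<delta>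
   \<and> rep_compat stB (\<lambda>a. st (S a)) ip act \<delta>"

definition A_Rep_C ::
  "('a::calg \<Rightarrow> ('a, 'a) tens) \<Rightarrow> ('a \<Rightarrow> 'a)
   \<Rightarrow> ('c::cvec \<Rightarrow> ('c, 'c) tens) \<Rightarrow> ('c \<Rightarrow> complex) \<Rightarrow> ('a \<Rightarrow> 'c \<Rightarrow> 'c) \<Rightarrow> ('c \<Rightarrow> 'c)
   \<Rightarrow> ('w::cvec \<Rightarrow> 'w \<Rightarrow> complex) \<Rightarrow> ('a \<Rightarrow> 'w \<Rightarrow> 'w) \<Rightarrow> ('w \<Rightarrow> ('w, 'c) tens) \<Rightarrow> bool" where
  "A_Rep_C \<Delta> st \<Delta>C \<epsilon>C actC dagC ip act \<delta> \<longleftrightarrow>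
     pre_hilbert ip \<and> alg_module act \<and> comodule \<Delta>C \<epsilon>C \<delta>
   \<and> mod_comod_compat \<Delta> actC act \<delta>
   \<and> rep_compat st dagC ip act \<delta>"

section \<open>The two induced representations on V \<odot> W\<close>

text \<open>Tensor product inner product: \<langle>v\<otimes>w, v'\<otimes>w'\<rangle> = \<langle>v,v'\<rangle>\<langle>w,w'\<rangle>.\<close>
definition tens_ip ::
  "('v \<Rightarrow> 'v \<Rightarrow> complex) \<Rightarrow> ('w \<Rightarrow> 'w \<Rightarrow> complex) \<Rightarrow> ('v, 'w) tens \<Rightarrow> ('v, 'w) tens \<Rightarrow> complex" where
  "tens_ip ipV ipW t s = cnj (t (\<lambda>v w. cnj (s (\<lambda>v' w'. ipV v v' * ipW w w'))))"

text \<open>{}_V Ind(W): b(v\<otimes>w) = bv \<otimes> w,  v\<otimes>w \<mapsto> v_(0) \<otimes> w_(0) \<otimes> v_(1) w_(1).\<close>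
definition indL_act :: "('b \<Rightarrow> 'v \<Rightarrow> 'v) \<Rightarrow> 'b \<Rightarrow> ('v, 'w) tens \<Rightarrow> ('v, 'w) tens" where
  "indL_act actV b t = (\<lambda>\<beta>. t (\<lambda>v w. \<beta> (actV b v) w))"

definition indL_coact ::
  "('v \<Rightarrow> ('v, 'a) tens) \<Rightarrow> ('w \<Rightarrow> ('w, 'c) tens) \<Rightarrow> ('a \<Rightarrow> 'c \<Rightarrow> 'c)
   \<Rightarrow> ('v, 'w) tens \<Rightarrow> ('v, 'w, 'c) tens3" where
  "indL_coact \<delta>V \<delta>W actC t =
     (\<lambda>\<gamma>. t (\<lambda>v w. \<delta>V v (\<lambda>v0 v1. \<delta>W w (\<lambda>w0 w1. \<gamma> v0 w0 (actC v1 w1)))))"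

text \<open>Ind^W(V): b(v\<otimes>w) = b_(1) v \<otimes> b_(2) w,  v\<otimes>w \<mapsto> v \<otimes> w_(0) \<otimes> w_(1).\<close>
definition indR_act ::
  "('b \<Rightarrow> ('b, 'a) tens) \<Rightarrow> ('b \<Rightarrow> 'v \<Rightarrow> 'v) \<Rightarrow> ('a \<Rightarrow> 'w \<Rightarrow> 'w)
   \<Rightarrow> 'b \<Rightarrow> ('v, 'w) tens \<Rightarrow> ('v, 'w) tens" where
  "indR_act \<delta>B actV actW b t = (\<lambda>\<beta>. \<delta>B b (\<lambda>b1 b2. t (\<lambda>v w. \<beta> (actV b1 v) (actW b2 w))))"

definition indR_coact :: "('w \<Rightarrow> ('w, 'c) tens) \<Rightarrow> ('v, 'w) tens \<Rightarrow> ('v, 'w, 'c) tens3" where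
  "indR_coact \<delta>W t = (\<lambda>\<gamma>. t (\<lambda>v w. \<delta>W w (\<lambda>w0 w1. \<gamma> v w0 w1)))"

text \<open>U is a unitary isomorphism of (B,C)-DK-representations from the structure
  (act1, coact1) to (act2, coact2) on V \<odot> W (both with inner product ip):
  a well-defined linear bijection of V \<odot> W, preserving the inner product, B-linear
  and C-colinear ((U \<otimes> id) \<circ> coact1 = coact2 \<circ> U).\<close>
definition unitary_iso ::
  "(('v::cvec, 'w::cvec) tens \<Rightarrow> ('v, 'w) tens \<Rightarrow> complex)
   \<Rightarrow> ('b \<Rightarrow> ('v, 'w) tens \<Rightarrow> ('v, 'w) tens) \<Rightarrow> (('v, 'w) tens \<Rightarrow> ('v, 'w, 'c::cvec) tens3)
   \<Rightarrow> ('b \<Rightarrow> ('v, 'w) tens \<Rightarrow> ('v, 'w) tens) \<Rightarrow> (('v, 'w) tens \<Rightarrow> ('v, 'w, 'c) tens3)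
   \<Rightarrow> (('v, 'w) tens \<Rightarrow> ('v, 'w) tens) \<Rightarrow> bool" where
  "unitary_iso ip act1 coact1 act2 coact2 U \<longleftrightarrow>
     (\<forall>t. is_tensor t \<longrightarrow> is_tensor (U t))
   \<and> (\<forall>t s. is_tensor t \<longrightarrow> is_tensor s \<longrightarrow> teq t s \<longrightarrow> teq (U t) (U s))
   \<and> (\<forall>t s. is_tensor t \<longrightarrow> is_tensor s \<longrightarrow> teq (U (tadd t s)) (tadd (U t) (U s)))
   \<and> (\<forall>c t. is_tensor t \<longrightarrow> teq (U (tscale c t)) (tscale c (U t)))
   \<and> (\<forall>t s. is_tensor t \<longrightarrow> is_tensor s \<longrightarrow> teq (U t) (U s) \<longrightarrow> teq t s)
   \<and> (\<forall>s. is_tensor s \<longrightarrow> (\<exists>t. is_tensor t \<and> teq (U t) s))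
   \<and> (\<forall>t s. is_tensor t \<longrightarrow> is_tensor s \<longrightarrow> ip (U t) (U s) = ip t s)
   \<and> (\<forall>b t. is_tensor t \<longrightarrow> teq (U (act1 b t)) (act2 b (U t)))
   \<and> (\<forall>t. is_tensor t \<longrightarrow>
        teq3 (coact2 (U t)) (\<lambda>\<gamma>. coact1 t (\<lambda>v w c. U (tens v w) (\<lambda>v' w'. \<gamma> v' w' c))))"

end

theory Submission
  imports Defs
begin


lemma cscale_zero_cvec: "cscale c (0::'a::cvec) = 0"
proof -
  have "cscale c (0::'a) = cscale c 0 + cscale c 0"
    by (metis add.right_neutral cscale_right_distrib)
  then show ?thesis by simp
qed

lemma clinearD1: "clinear f \<Longrightarrow> f (x + y) = f x + f y"
  by (simp add: clinear_def)
lemma clinearD2: "clinear f \<Longrightarrow> f (cscale c x) = cscale c (f x)"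
  by (simp add: clinear_def)
lemma clinearD2c: "clinear (f :: 'a::cvec \<Rightarrow> complex) \<Longrightarrow> f (cscale c x) = c * f x"
  by (simp add: clinear_def cscale_complex_def)
lemma clinearI: "(\<And>x y. f (x + y) = f x + f y) \<Longrightarrow> (\<And>c x. f (cscale c x) = cscale c (f x)) \<Longrightarrow> clinear f"
  by (simp add: clinear_def)
lemma clinearIc: "(\<And>x y. f (x + y) = f x + f y) \<Longrightarrow> (\<And>c x. f (cscale c x) = c * f x) \<Longrightarrow> clinear (f :: 'a::cvec \<Rightarrow> complex)"
  by (simp add: clinear_def cscale_complex_def)
lemma antilinearD1: "antilinear f \<Longrightarrow> f (x + y) = f x + f y"
  by (simp add: antilinear_def)
lemma antilinearD2: "antilinear f \<Longrightarrow> f (cscale c x) = cscale (cnj c) (f x)"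
  by (simp add: antilinear_def)
lemma antilinearD2c: "antilinear (f :: 'a::cvec \<Rightarrow> complex) \<Longrightarrow> f (cscale c x) = cnj c * f x"
  by (simp add: antilinear_def cscale_complex_def)
lemma antilinearIc: "(\<And>x y. f (x + y) = f x + f y) \<Longrightarrow> (\<And>c x. f (cscale c x) = cnj c * f x) \<Longrightarrow> antilinear (f :: 'a::cvec \<Rightarrow> complex)"
  by (simp add: antilinear_def cscale_complex_def)

lemma clinear_id: "clinear (\<lambda>x. x)"
  by (simp add: clinear_def)
lemma clinear_comp: "clinear f \<Longrightarrow> clinear g \<Longrightarrow> clinear (\<lambda>x. f (g x))"
  by (simp add: clinear_def)
lemma clinear_comp_al_al: "antilinear f \<Longrightarrow> antilinear g \<Longrightarrow> clinear (\<lambda>x. f (g x))"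
  by (simp add: clinear_def antilinear_def)
lemma al_comp_cl_al: "clinear f \<Longrightarrow> antilinear g \<Longrightarrow> antilinear (\<lambda>x. f (g x))"
  by (simp add: clinear_def antilinear_def)
lemma al_comp_al_cl: "antilinear f \<Longrightarrow> clinear g \<Longrightarrow> antilinear (\<lambda>x. f (g x))"
  by (simp add: clinear_def antilinear_def)
lemma clinear_cnj: "antilinear (f :: 'a::cvec \<Rightarrow> complex) \<Longrightarrow> clinear (\<lambda>x. cnj (f x))"
  by (simp add: clinear_def antilinear_def cscale_complex_def)
lemma al_cnj: "clinear (f :: 'a::cvec \<Rightarrow> complex) \<Longrightarrow> antilinear (\<lambda>x. cnj (f x))"
  by (simp add: clinear_def antilinear_def cscale_complex_def)
lemma clinear_mult_const: "clinear (f :: 'a::cvec \<Rightarrow> complex) \<Longrightarrow> clinear (\<lambda>x. f x * c)"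
  by (simp add: clinear_def cscale_complex_def algebra_simps)
lemma clinear_const_mult: "clinear (f :: 'a::cvec \<Rightarrow> complex) \<Longrightarrow> clinear (\<lambda>x. c * f x)"
  by (simp add: clinear_def cscale_complex_def algebra_simps)
lemma al_mult_const: "antilinear (f :: 'a::cvec \<Rightarrow> complex) \<Longrightarrow> antilinear (\<lambda>x. f x * c)"
  by (simp add: antilinear_def cscale_complex_def algebra_simps)
lemma al_const_mult: "antilinear (f :: 'a::cvec \<Rightarrow> complex) \<Longrightarrow> antilinear (\<lambda>x. c * f x)"
  by (simp add: antilinear_def cscale_complex_def algebra_simps)
lemma clinear_add: "clinear f \<Longrightarrow> clinear g \<Longrightarrow> clinear (\<lambda>x. f x + g x)"
  by (simp add: clinear_def cscale_right_distrib algebra_simps)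
lemma clinear_zero: "clinear (\<lambda>x. 0 :: 'b::cvec)"
  by (simp add: clinear_def cscale_zero_cvec)
lemma clinear_sum_list: "(\<And>l. l \<in> set L \<Longrightarrow> clinear (F l)) \<Longrightarrow> clinear (\<lambda>x. \<Sum>l\<leftarrow>L. F l x)"
  by (induction L) (auto intro: clinear_add clinear_zero)

lemma cbilinearI: "(\<And>y. clinear (\<lambda>x. \<beta> x y)) \<Longrightarrow> (\<And>x. clinear (\<beta> x)) \<Longrightarrow> cbilinear \<beta>"
  by (simp add: cbilinear_def)
lemma cbilinearD1: "cbilinear \<beta> \<Longrightarrow> clinear (\<lambda>x. \<beta> x y)"
  by (simp add: cbilinear_def)
lemma cbilinearD2: "cbilinear \<beta> \<Longrightarrow> clinear (\<beta> x)"
  by (simp add: cbilinear_def)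
lemma ctrilinearI: "(\<And>y z. clinear (\<lambda>x. \<gamma> x y z)) \<Longrightarrow> (\<And>x z. clinear (\<lambda>y. \<gamma> x y z))
   \<Longrightarrow> (\<And>x y. clinear (\<gamma> x y)) \<Longrightarrow> ctrilinear \<gamma>"
  by (simp add: ctrilinear_def)

lemma cbilinear_add: "cbilinear f \<Longrightarrow> cbilinear g \<Longrightarrow> cbilinear (\<lambda>x y. f x y + g x y)"
  by (simp add: cbilinear_def clinear_add)
lemma cbilinear_zero: "cbilinear (\<lambda>x y. 0)"
  by (simp add: cbilinear_def clinear_zero)
lemma cbilinear_sum_list: "(\<And>l. l \<in> set L \<Longrightarrow> cbilinear (F l)) \<Longrightarrow> cbilinear (\<lambda>x y. \<Sum>l\<leftarrow>L. F l x y)"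
  by (induction L) (auto intro: cbilinear_add cbilinear_zero)

lemma tensor_obtain:
  assumes "is_tensor t"
  obtains xs where "\<And>\<beta>. cbilinear \<beta> \<Longrightarrow> t \<beta> = (\<Sum>(x, y)\<leftarrow>xs. \<beta> x y)"
  using assms unfolding is_tensor_def by blast

lemma tensor_add: "is_tensor t \<Longrightarrow> cbilinear f \<Longrightarrow> cbilinear g \<Longrightarrow> t (\<lambda>x y. f x y + g x y) = t f + t g"
  apply (erule tensor_obtain)
  apply (simp add: cbilinear_add split_def sum_list_addf)
  done

lemma tensor_zero: "is_tensor t \<Longrightarrow> t (\<lambda>x y. 0) = 0"
  apply (erule tensor_obtain)
  apply (simp add: cbilinear_zero split_def)
  done

lemma tensor_sum_list: "is_tensor t \<Longrightarrow> (\<And>l. l \<in> set L \<Longrightarrow> cbilinear (F l))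
   \<Longrightarrow> t (\<lambda>x y. \<Sum>l\<leftarrow>L. F l x y) = (\<Sum>l\<leftarrow>L. t (F l))"
proof (induction L)
  case Nil then show ?case by (simp add: tensor_zero)
next
  case (Cons a L)
  have "t (\<lambda>x y. F a x y + (\<Sum>l\<leftarrow>L. F l x y)) = t (F a) + t (\<lambda>x y. \<Sum>l\<leftarrow>L. F l x y)"
    using Cons.prems by (intro tensor_add) (auto intro!: cbilinear_sum_list)
  then show ?case
    using Cons by simp
qed

lemma tensor_clinear:
  assumes t: "is_tensor t" and B: "\<And>z. cbilinear (B z)" and L: "\<And>x y. clinear (\<lambda>z. B z x y)"
  shows "clinear (\<lambda>z. t (B z))"
proof -
  obtain xs where xs: "\<And>\<beta>. cbilinear \<beta> \<Longrightarrow> t \<beta> = (\<Sum>(x, y)\<leftarrow>xs. \<beta> x y)"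
    using t unfolding is_tensor_def by blast
  have e: "(\<lambda>z. t (B z)) = (\<lambda>z. \<Sum>p\<leftarrow>xs. B z (fst p) (snd p))"
    using xs B by (simp add: split_def)
  show ?thesis unfolding e
    by (rule clinear_sum_list) (rule L)
qed

lemma tlinear_clinear: "tlinear d \<Longrightarrow> cbilinear \<beta> \<Longrightarrow> clinear (\<lambda>v. d v \<beta>)"
  by (simp add: tlinear_def clinear_def cscale_complex_def)

lemma sum_list_swap:
  "(\<Sum>a\<leftarrow>xs. \<Sum>b\<leftarrow>ys. f a b) = (\<Sum>b\<leftarrow>ys. \<Sum>a\<leftarrow>xs. (f a b :: 'c::comm_monoid_add))"
  by (induction xs) (simp_all add: sum_list_addf)

lemma tensor_fubini:
  assumes a: "is_tensor a" and b: "is_tensor b"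
    and F1: "\<And>p q. cbilinear (F p q)" and F2: "\<And>x y. cbilinear (\<lambda>p q. F p q x y)"
  shows "a (\<lambda>p q. b (F p q)) = b (\<lambda>x y. a (\<lambda>p q. F p q x y))"
proof -
  obtain xs where xs: "\<And>\<beta>. cbilinear \<beta> \<Longrightarrow> a \<beta> = (\<Sum>(x, y)\<leftarrow>xs. \<beta> x y)"
    using a unfolding is_tensor_def by blast
  obtain ys where ys: "\<And>\<beta>. cbilinear \<beta> \<Longrightarrow> b \<beta> = (\<Sum>(x, y)\<leftarrow>ys. \<beta> x y)"
    using b unfolding is_tensor_def by blast
  have e1: "(\<lambda>p q. b (F p q)) = (\<lambda>p q. \<Sum>l\<leftarrow>ys. F p q (fst l) (snd l))"
    using ys F1 by (simp add: split_def)
  have e2: "(\<lambda>x y. a (\<lambda>p q. F p q x y)) = (\<lambda>x y. \<Sum>l\<leftarrow>xs. F (fst l) (snd l) x y)"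
    using xs F2 by (simp add: split_def)
  have "a (\<lambda>p q. b (F p q)) = (\<Sum>k\<leftarrow>xs. \<Sum>l\<leftarrow>ys. F (fst k) (snd k) (fst l) (snd l))"
    unfolding e1 by (subst xs) (auto intro!: cbilinear_sum_list F2 simp: split_def)
  also have "\<dots> = (\<Sum>l\<leftarrow>ys. \<Sum>k\<leftarrow>xs. F (fst k) (snd k) (fst l) (snd l))"
    by (rule sum_list_swap)
  also have "\<dots> = b (\<lambda>x y. a (\<lambda>p q. F p q x y))"
    unfolding e2 by (subst ys) (auto intro!: cbilinear_sum_list F1 simp: split_def)
  finally show ?thesis .
qed



lemma cnj_sum_list: "cnj (\<Sum>l\<leftarrow>L. f l) = (\<Sum>l\<leftarrow>L. cnj (f l))"
  by (induction L) auto

lemma sum_list_concat_map: "(\<Sum>p\<leftarrow>concat (map g xs). f p) = (\<Sum>x\<leftarrow>xs. \<Sum>p\<leftarrow>g x. (f p :: 'c::monoid_add))"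
  by (induction xs) auto

lemma mod_lin1: "alg_module act \<Longrightarrow> clinear (\<lambda>x. act x v)"
  by (simp add: alg_module_def clinear_def)
lemma mod_lin2: "alg_module act \<Longrightarrow> clinear (act x)"
  by (simp add: alg_module_def clinear_def)
lemma mod_one: "alg_module act \<Longrightarrow> act 1 v = v"
  by (simp add: alg_module_def)
lemma mod_mult: "alg_module act \<Longrightarrow> act (x * y) v = act x (act y v)"
  by (simp add: alg_module_def)

lemma ip_lin: "pre_hilbert ip \<Longrightarrow> clinear (ip x)"
  unfolding pre_hilbert_def by (intro clinearIc) blast+
lemma ip_herm: "pre_hilbert ip \<Longrightarrow> ip y x = cnj (ip x y)"
  unfolding pre_hilbert_def by blast
lemma ip_al: "pre_hilbert ip \<Longrightarrow> antilinear (\<lambda>x. ip x y)"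
proof (rule antilinearIc)
  assume p: "pre_hilbert ip"
  fix x1 x2 c x
  show "ip (x1 + x2) y = ip x1 y + ip x2 y"
    using p unfolding pre_hilbert_def by (metis complex_cnj_add)
  show "ip (cscale c x) y = cnj c * ip x y"
    using p unfolding pre_hilbert_def by (metis complex_cnj_mult)
qed

lemma mult_lin1: "clinear (\<lambda>x. x * (y::'a::calg))"
  by (simp add: clinear_def distrib_right cscale_mult_left)
lemma mult_lin2: "clinear (\<lambda>y. x * (y::'a::calg))"
  by (simp add: clinear_def distrib_left cscale_mult_right)

lemma st_al: "star_involution st \<Longrightarrow> antilinear st"
  by (simp add: star_involution_def)
lemma st_st: "star_involution st \<Longrightarrow> st (st x) = x"
  by (simp add: star_involution_def)
lemma st_mult: "star_involution st \<Longrightarrow> st (x * y) = st y * st x"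
  by (simp add: star_involution_def)
lemma st_one: "star_involution st \<Longrightarrow> st 1 = (1::'a::calg)"
proof -
  assume s: "star_involution st"
  have a: "st (x * y) = st y * st x" for x y using s by (simp add: star_involution_def)
  have b: "st (st x) = x" for x using s by (simp add: star_involution_def)
  have "1 = st (st (1::'a))" by (simp add: b)
  also have "\<dots> = st (st 1 * 1)" by simp
  also have "\<dots> = st 1 * st (st 1)" by (rule a)
  also have "\<dots> = st 1" by (simp add: b)
  finally show ?thesis by simp
qed

lemma comod_tlinear: "comodule \<Delta>Y \<epsilon>Y \<delta> \<Longrightarrow> tlinear \<delta>"
  by (simp add: comodule_def)
lemma comod_tensor: "comodule \<Delta>Y \<epsilon>Y \<delta> \<Longrightarrow> is_tensor (\<delta> v)"
  by (simp add: comodule_def tlinear_def)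
lemma comod_coassoc: "comodule \<Delta>Y \<epsilon>Y \<delta> \<Longrightarrow> ctrilinear \<gamma> \<Longrightarrow>
        \<delta> v (\<lambda>v0 v1. \<delta> v0 (\<lambda>p q. \<gamma> p q v1)) = \<delta> v (\<lambda>v0 v1. \<Delta>Y v1 (\<lambda>p q. \<gamma> v0 p q))"
  by (simp add: comodule_def)
lemma comod_counit: "comodule \<Delta>Y \<epsilon>Y \<delta> \<Longrightarrow> clinear \<psi> \<Longrightarrow> \<delta> v (\<lambda>v0 v1. \<psi> v0 * \<epsilon>Y v1) = \<psi> v"
  by (simp add: comodule_def)

lemma G_bilin:
  assumes d: "tlinear \<delta>" and b: "cbilinear \<beta>"
    and h1: "\<And>w. clinear (\<lambda>a. h a w)" and h2: "\<And>a. clinear (h a)"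
  shows "cbilinear (\<lambda>v w. \<delta> v (\<lambda>v0 v1. \<beta> v0 (h v1 w)))"
proof -
  have inner: "cbilinear (\<lambda>v0 v1. \<beta> v0 (h v1 w))" for w
    by (intro cbilinearI cbilinearD1[OF b] clinear_comp[OF cbilinearD2[OF b] h1])
  show ?thesis
  proof (rule cbilinearI)
    fix w show "clinear (\<lambda>v. \<delta> v (\<lambda>v0 v1. \<beta> v0 (h v1 w)))"
      by (rule tlinear_clinear[OF d inner])
  next
    fix v
    have t: "is_tensor (\<delta> v)" using d by (simp add: tlinear_def)
    show "clinear (\<lambda>w. \<delta> v (\<lambda>v0 v1. \<beta> v0 (h v1 w)))"
      by (rule tensor_clinear[OF t inner]) (rule clinear_comp[OF cbilinearD2[OF b] h2])
  qed
qed

lemma G_tensor: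
  fixes t :: "('v::cvec, 'w::cvec) tens" and \<delta> :: "'v \<Rightarrow> ('v, 'a::cvec) tens"
    and h :: "'a \<Rightarrow> 'w \<Rightarrow> 'r::cvec"
  assumes d: "tlinear \<delta>" and t: "is_tensor t"
    and h1: "\<And>w. clinear (\<lambda>a. h a w)" and h2: "\<And>a. clinear (h a)"
  shows "is_tensor (\<lambda>\<beta>. t (\<lambda>v w. \<delta> v (\<lambda>v0 v1. \<beta> v0 (h v1 w))))"
proof -
  obtain xs where xs: "\<And>\<beta>. cbilinear \<beta> \<Longrightarrow> t \<beta> = (\<Sum>(x, y)\<leftarrow>xs. \<beta> x y)"
    using t unfolding is_tensor_def by blast
  have "\<forall>v. \<exists>ys. \<forall>\<beta>. cbilinear \<beta> \<longrightarrow> \<delta> v \<beta> = (\<Sum>(x, y)\<leftarrow>ys. \<beta> x y)"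
    using d by (simp add: tlinear_def is_tensor_def)
  then obtain L where L: "\<And>v \<beta>. cbilinear \<beta> \<Longrightarrow> \<delta> v \<beta> = (\<Sum>(x, y)\<leftarrow>L v. \<beta> x y)"
    by (auto dest!: choice)
  show ?thesis unfolding is_tensor_def
  proof (intro exI allI impI)
    fix \<beta> :: "'v \<Rightarrow> 'r \<Rightarrow> complex" assume b: "cbilinear \<beta>"
    have inner: "cbilinear (\<lambda>v0 v1. \<beta> v0 (h v1 w))" for w
      by (intro cbilinearI cbilinearD1[OF b] clinear_comp[OF cbilinearD2[OF b] h1])
    have "t (\<lambda>v w. \<delta> v (\<lambda>v0 v1. \<beta> v0 (h v1 w))) = (\<Sum>(x, y)\<leftarrow>xs. \<delta> x (\<lambda>v0 v1. \<beta> v0 (h v1 y)))"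
      by (rule xs[OF G_bilin[OF d b h1 h2]])
    also have "\<dots> = (\<Sum>(x, y)\<leftarrow>xs. \<Sum>(p, q)\<leftarrow>L x. \<beta> p (h q y))"
      using L[OF inner] by simp
    also have "\<dots> = (\<Sum>(p, q)\<leftarrow>concat (map (\<lambda>(x, y). map (\<lambda>(p, q). (p, h q y)) (L x)) xs). \<beta> p q)"
      by (simp add: sum_list_concat_map split_def o_def)
    finally show "t (\<lambda>v w. \<delta> v (\<lambda>v0 v1. \<beta> v0 (h v1 w))) = (\<Sum>(p, q)\<leftarrow>concat (map (\<lambda>(x, y). map (\<lambda>(p, q). (p, h q y)) (L x)) xs). \<beta> p q)" .
  qed
qed



lemma inv1:
  assumes cm: "comodule \<Delta> \<epsilon> \<delta>" and m: "alg_module actW" and Sl: "clinear S"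
    and ant: "\<forall>x \<psi>. clinear (\<psi> :: 'a::calg \<Rightarrow> complex) \<longrightarrow> \<Delta> x (\<lambda>x1 x2. \<psi> (S x1 * x2)) = \<epsilon> x * \<psi> 1"
    and b: "cbilinear \<beta>"
  shows "\<delta> v (\<lambda>v0 v1. \<delta> v0 (\<lambda>p q. \<beta> p (actW (S q) (actW v1 w)))) = \<beta> v w"
proof -
  have tri: "ctrilinear (\<lambda>p q r. \<beta> p (actW (S q) (actW r w)))"
  proof (rule ctrilinearI)
    fix y z show "clinear (\<lambda>x. \<beta> x (actW (S y) (actW z w)))" by (rule cbilinearD1[OF b])
  next
    fix x z show "clinear (\<lambda>y. \<beta> x (actW (S y) (actW z w)))"
      by (intro clinear_comp[OF cbilinearD2[OF b]] clinear_comp[OF mod_lin1[OF m] Sl])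
  next
    fix x y show "clinear (\<lambda>z. \<beta> x (actW (S y) (actW z w)))"
      by (intro clinear_comp[OF cbilinearD2[OF b]] clinear_comp[OF mod_lin2[OF m] mod_lin1[OF m]])
  qed
  have "\<delta> v (\<lambda>v0 v1. \<delta> v0 (\<lambda>p q. \<beta> p (actW (S q) (actW v1 w))))
      = \<delta> v (\<lambda>v0 v1. \<Delta> v1 (\<lambda>p q. \<beta> v0 (actW (S p) (actW q w))))"
    using comod_coassoc[OF cm tri, of v] by simp
  also have "\<dots> = \<delta> v (\<lambda>v0 v1. \<beta> v0 w * \<epsilon> v1)"
  proof -
    have "\<Delta> v1 (\<lambda>p q. \<beta> v0 (actW (S p) (actW q w))) = \<beta> v0 w * \<epsilon> v1" for v0 v1
    proof -
      have l: "clinear (\<lambda>a. \<beta> v0 (actW a w))"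
        by (rule clinear_comp[OF cbilinearD2[OF b] mod_lin1[OF m]])
      have "\<Delta> v1 (\<lambda>p q. \<beta> v0 (actW (S p) (actW q w))) = \<Delta> v1 (\<lambda>p q. \<beta> v0 (actW (S p * q) w))"
        by (simp add: mod_mult[OF m])
      also have "\<dots> = \<epsilon> v1 * \<beta> v0 (actW 1 w)"
        using ant l by blast
      finally show ?thesis by (simp add: mod_one[OF m])
    qed
    then show ?thesis by simp
  qed
  also have "\<dots> = \<beta> v w"
    by (rule comod_counit[OF cm cbilinearD1[OF b]])
  finally show ?thesis .
qed

lemma inv2:
  assumes cm: "comodule \<Delta> \<epsilon> \<delta>" and m: "alg_module actW" and Sl: "clinear S"
    and ant: "\<forall>x \<psi>. clinear (\<psi> :: 'a::calg \<Rightarrow> complex) \<longrightarrow> \<Delta> x (\<lambda>x1 x2. \<psi> (x1 * S x2)) = \<epsilon> x * \<psi> 1"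
    and b: "cbilinear \<beta>"
  shows "\<delta> v (\<lambda>v0 v1. \<delta> v0 (\<lambda>p q. \<beta> p (actW q (actW (S v1) w)))) = \<beta> v w"
proof -
  have tri: "ctrilinear (\<lambda>p q r. \<beta> p (actW q (actW (S r) w)))"
  proof (rule ctrilinearI)
    fix y z show "clinear (\<lambda>x. \<beta> x (actW y (actW (S z) w)))" by (rule cbilinearD1[OF b])
  next
    fix x z show "clinear (\<lambda>y. \<beta> x (actW y (actW (S z) w)))"
      by (intro clinear_comp[OF cbilinearD2[OF b]] mod_lin1[OF m])
  next
    fix x y show "clinear (\<lambda>z. \<beta> x (actW y (actW (S z) w)))"
      by (intro clinear_comp[OF cbilinearD2[OF b]] clinear_comp[OF mod_lin2[OF m]] clinear_comp[OF mod_lin1[OF m] Sl])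
  qed
  have "\<delta> v (\<lambda>v0 v1. \<delta> v0 (\<lambda>p q. \<beta> p (actW q (actW (S v1) w))))
      = \<delta> v (\<lambda>v0 v1. \<Delta> v1 (\<lambda>p q. \<beta> v0 (actW p (actW (S q) w))))"
    using comod_coassoc[OF cm tri, of v] by simp
  also have "\<dots> = \<delta> v (\<lambda>v0 v1. \<beta> v0 w * \<epsilon> v1)"
  proof -
    have "\<Delta> v1 (\<lambda>p q. \<beta> v0 (actW p (actW (S q) w))) = \<beta> v0 w * \<epsilon> v1" for v0 v1
    proof -
      have l: "clinear (\<lambda>a. \<beta> v0 (actW a w))"
        by (rule clinear_comp[OF cbilinearD2[OF b] mod_lin1[OF m]])
      have "\<Delta> v1 (\<lambda>p q. \<beta> v0 (actW p (actW (S q) w))) = \<Delta> v1 (\<lambda>p q. \<beta> v0 (actW (p * S q) w))"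
        by (simp add: mod_mult[OF m])
      also have "\<dots> = \<epsilon> v1 * \<beta> v0 (actW 1 w)"
        using ant l by blast
      finally show ?thesis by (simp add: mod_one[OF m])
    qed
    then show ?thesis by simp
  qed
  also have "\<dots> = \<beta> v w"
    by (rule comod_counit[OF cm cbilinearD1[OF b]])
  finally show ?thesis .
qed



lemma ip_step:
  fixes \<delta>V :: "'v::cvec \<Rightarrow> ('v, 'a::calg) tens" and ipV :: "'v \<Rightarrow> 'v \<Rightarrow> complex"
    and ipW :: "'w::cvec \<Rightarrow> 'w \<Rightarrow> complex" and actW :: "'a \<Rightarrow> 'w \<Rightarrow> 'w"
    and s :: "('v, 'w) tens"
  assumes cm: "comodule \<Delta> \<epsilon> \<delta>V"
    and rcV: "\<forall>v w \<psi>. clinear (\<psi> :: 'a \<Rightarrow> complex) \<longrightarrow>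
        \<delta>V w (\<lambda>w0 w1. ipV v w0 * \<psi> w1) = cnj (\<delta>V v (\<lambda>v0 v1. cnj (ipV v0 w * \<psi> (st (S v1)))))"
    and pV: "pre_hilbert ipV" and pW: "pre_hilbert ipW" and m: "alg_module actW"
    and rcW: "\<forall>x v w. ipW v (actW x w) = ipW (actW (st x) v) w"
    and Sl: "clinear S" and si: "star_involution st"
    and ant: "\<forall>x \<psi>. clinear (\<psi> :: 'a \<Rightarrow> complex) \<longrightarrow> \<Delta> x (\<lambda>x1 x2. \<psi> (S x1 * x2)) = \<epsilon> x * \<psi> 1"
    and s: "is_tensor s"
  shows "\<delta>V v (\<lambda>v0 v1. cnj (s (\<lambda>v' w'. \<delta>V v' (\<lambda>p q. ipV v0 p * ipW (actW v1 w) (actW q w')))))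
       = cnj (s (\<lambda>v' w'. ipV v v' * ipW w w'))"
proof -
  have tl: "tlinear \<delta>V" by (rule comod_tlinear[OF cm])
  have tV: "is_tensor (\<delta>V x)" for x by (rule comod_tensor[OF cm])
  obtain xs where xs: "\<And>\<beta>. cbilinear \<beta> \<Longrightarrow> s \<beta> = (\<Sum>(x, y)\<leftarrow>xs. \<beta> x y)"
    using s unfolding is_tensor_def by blast
  have stS: "antilinear (\<lambda>q. st (S q))" by (rule al_comp_al_cl[OF st_al[OF si] Sl])
  have Wad: "ipW (actW a u) z = ipW u (actW (st a) z)" for a u z
    using rcW st_st[OF si] by metis
  have Lp: "clinear (\<lambda>p. cnj (ipV p x * K))" for x K
    by (rule clinear_cnj[OF al_mult_const[OF ip_al[OF pV]]])
  have Lq: "clinear (\<lambda>q. cnj (K * ipW A (actW (st (S q)) y)))" for K A y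
    by (rule clinear_cnj[OF al_const_mult[OF al_comp_cl_al[OF ip_lin[OF pW] al_comp_cl_al[OF mod_lin1[OF m] stS]]]])
  have Lr: "clinear (\<lambda>r. cnj (K * ipW (actW r w) Z))" for K Z
    by (rule clinear_cnj[OF al_const_mult[OF al_comp_al_cl[OF ip_al[OF pW] mod_lin1[OF m]]]])
  define H where "H x y v0 v1 = \<delta>V v0 (\<lambda>p q. cnj (ipV p x * ipW (actW v1 w) (actW (st (S q)) y)))" for x y v0 v1
  have inner: "cbilinear (\<lambda>p q. cnj (ipV p x * ipW (actW v1 w) (actW (st (S q)) y)))" for x y v1
  proof (rule cbilinearI)
    fix q show "clinear (\<lambda>p. cnj (ipV p x * ipW (actW v1 w) (actW (st (S q)) y)))" by (rule Lp)
  next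
    fix p
    have "(\<lambda>q. cnj (ipV p x * ipW (actW v1 w) (actW (st (S q)) y)))
        = (\<lambda>q. cnj (ipV p x * ipW (actW v1 w) (actW (st (S q)) y)))" by simp
    then show "clinear (\<lambda>q. cnj (ipV p x * ipW (actW v1 w) (actW (st (S q)) y)))" using Lq by simp
  qed
  have Hbil: "cbilinear (H x y)" for x y
  proof (rule cbilinearI)
    fix v1 show "clinear (\<lambda>v0. H x y v0 v1)"
      unfolding H_def by (rule tlinear_clinear[OF tl inner])
  next
    fix v0 show "clinear (H x y v0)"
      unfolding H_def
    proof (rule tensor_clinear[OF tV inner])
      fix p q show "clinear (\<lambda>v1. cnj (ipV p x * ipW (actW v1 w) (actW (st (S q)) y)))"
        using Lr[of "ipV p x" "actW (st (S q)) y"] by (simp add: mult.commute)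
    qed
  qed
  have step1: "cnj (s (\<lambda>v' w'. \<delta>V v' (\<lambda>p q. ipV v0 p * ipW (actW v1 w) (actW q w'))))
      = (\<Sum>l\<leftarrow>xs. H (fst l) (snd l) v0 v1)" for v0 v1
  proof -
    have bb: "cbilinear (\<lambda>p z. ipV v0 p * ipW (actW v1 w) z)"
      by (intro cbilinearI clinear_mult_const clinear_const_mult ip_lin[OF pV] ip_lin[OF pW])
    have "s (\<lambda>v' w'. \<delta>V v' (\<lambda>p q. ipV v0 p * ipW (actW v1 w) (actW q w')))
        = (\<Sum>l\<leftarrow>xs. \<delta>V (fst l) (\<lambda>p q. ipV v0 p * ipW (actW v1 w) (actW q (snd l))))"
      using xs[OF G_bilin[OF tl bb mod_lin1[OF m] mod_lin2[OF m]]] by (simp add: split_def)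
    moreover have "cnj (\<delta>V x (\<lambda>p q. ipV v0 p * ipW (actW v1 w) (actW q y))) = H x y v0 v1" for x y
    proof -
      have ps: "clinear (\<lambda>q. ipW (actW v1 w) (actW q y))"
        by (rule clinear_comp[OF ip_lin[OF pW] mod_lin1[OF m]])
      show ?thesis unfolding H_def using rcV ps by simp
    qed
    ultimately show ?thesis by (simp add: cnj_sum_list)
  qed
  have step3: "\<delta>V v (H x y) = cnj (ipV v x * ipW w y)" for x y
  proof -
    have tri: "ctrilinear (\<lambda>p q r. cnj (ipV p x * ipW (actW r w) (actW (st (S q)) y)))"
    proof (rule ctrilinearI)
      fix q r show "clinear (\<lambda>p. cnj (ipV p x * ipW (actW r w) (actW (st (S q)) y)))" by (rule Lp)
    next
      fix p r show "clinear (\<lambda>q. cnj (ipV p x * ipW (actW r w) (actW (st (S q)) y)))" by (rule Lq)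
    next
      fix p q show "clinear (\<lambda>r. cnj (ipV p x * ipW (actW r w) (actW (st (S q)) y)))"
        using Lr[of "ipV p x" "actW (st (S q)) y"] by (simp add: mult.commute)
    qed
    have "\<delta>V v (H x y) = \<delta>V v (\<lambda>v0 v1. \<Delta> v1 (\<lambda>p q. cnj (ipV v0 x * ipW (actW q w) (actW (st (S p)) y))))"
      unfolding H_def using comod_coassoc[OF cm tri, of v] by simp
    also have "\<dots> = \<delta>V v (\<lambda>v0 v1. cnj (ipV v0 x * ipW w y) * \<epsilon> v1)"
    proof -
      have "\<Delta> v1 (\<lambda>p q. cnj (ipV v0 x * ipW (actW q w) (actW (st (S p)) y))) = cnj (ipV v0 x * ipW w y) * \<epsilon> v1" for v0 v1
      proof -
        have ps: "clinear (\<lambda>a. cnj (ipV v0 x * ipW w (actW (st a) y)))"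
          by (rule clinear_cnj[OF al_const_mult[OF al_comp_cl_al[OF ip_lin[OF pW] al_comp_cl_al[OF mod_lin1[OF m] st_al[OF si]]]]])
        have "\<Delta> v1 (\<lambda>p q. cnj (ipV v0 x * ipW (actW q w) (actW (st (S p)) y)))
            = \<Delta> v1 (\<lambda>p q. cnj (ipV v0 x * ipW w (actW (st (S p * q)) y)))"
          by (simp add: Wad st_mult[OF si] mod_mult[OF m])
        also have "\<dots> = \<epsilon> v1 * cnj (ipV v0 x * ipW w (actW (st 1) y))"
          using ant ps by blast
        finally show ?thesis by (simp add: st_one[OF si] mod_one[OF m] mult.commute)
      qed
      then show ?thesis by simp
    qed
    also have "\<dots> = cnj (ipV v x * ipW w y)"
      by (rule comod_counit[OF cm Lp])
    finally show ?thesis .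
  qed
  have "\<delta>V v (\<lambda>v0 v1. cnj (s (\<lambda>v' w'. \<delta>V v' (\<lambda>p q. ipV v0 p * ipW (actW v1 w) (actW q w')))))
      = \<delta>V v (\<lambda>v0 v1. \<Sum>l\<leftarrow>xs. H (fst l) (snd l) v0 v1)"
    by (simp add: step1)
  also have "\<dots> = (\<Sum>l\<leftarrow>xs. \<delta>V v (H (fst l) (snd l)))"
    by (rule tensor_sum_list[OF tV Hbil])
  also have "\<dots> = (\<Sum>l\<leftarrow>xs. cnj (ipV v (fst l) * ipW w (snd l)))"
    by (simp add: step3)
  also have "\<dots> = cnj (s (\<lambda>v' w'. ipV v v' * ipW w w'))"
  proof -
    have bb: "cbilinear (\<lambda>v' w'. ipV v v' * ipW w w')"
      by (intro cbilinearI clinear_mult_const clinear_const_mult ip_lin[OF pV] ip_lin[OF pW])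
    show ?thesis using xs[OF bb] by (simp add: cnj_sum_list split_def)
  qed
  finally show ?thesis .
qed



lemma ctriD1: "ctrilinear \<gamma> \<Longrightarrow> clinear (\<lambda>x. \<gamma> x y z)" by (simp add: ctrilinear_def)
lemma ctriD2: "ctrilinear \<gamma> \<Longrightarrow> clinear (\<lambda>y. \<gamma> x y z)" by (simp add: ctrilinear_def)
lemma ctriD3: "ctrilinear \<gamma> \<Longrightarrow> clinear (\<gamma> x y)" by (simp add: ctrilinear_def)

lemma blin_step:
  assumes cm: "comodule \<Delta> \<epsilon> \<delta>V" and mV: "alg_module actV" and mW: "alg_module actW"
    and compat: "mod_comod_compat \<delta>B (\<lambda>a y. a * y) actV \<delta>V"
    and tB: "is_tensor (\<delta>B b)" and t: "is_tensor t" and b: "cbilinear \<beta>"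
  shows "t (\<lambda>v w. \<delta>V (actV b v) (\<lambda>v0 v1. \<beta> v0 (actW v1 w)))
       = \<delta>B b (\<lambda>b1 b2. t (\<lambda>v w. \<delta>V v (\<lambda>v0 v1. \<beta> (actV b1 v0) (actW b2 (actW v1 w)))))"
proof -
  have tl: "tlinear \<delta>V" by (rule comod_tlinear[OF cm])
  have tV: "is_tensor (\<delta>V x)" for x by (rule comod_tensor[OF cm])
  have F1: "cbilinear (\<lambda>v w. \<delta>V v (\<lambda>v0 v1. \<beta> (actV b1 v0) (actW b2 (actW v1 w))))" for b1 b2
  proof -
    have bb: "cbilinear (\<lambda>x z. \<beta> (actV b1 x) (actW b2 z))"
      by (intro cbilinearI clinear_comp[OF cbilinearD1[OF b]] clinear_comp[OF cbilinearD2[OF b]]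
          mod_lin2[OF mV] mod_lin2[OF mW])
    show ?thesis using G_bilin[OF tl bb mod_lin1[OF mW] mod_lin2[OF mW]] by simp
  qed
  have F2: "cbilinear (\<lambda>b1 b2. \<delta>V v (\<lambda>v0 v1. \<beta> (actV b1 v0) (actW b2 (actW v1 w))))" for v w
  proof (rule cbilinearI)
    fix b2
    show "clinear (\<lambda>b1. \<delta>V v (\<lambda>v0 v1. \<beta> (actV b1 v0) (actW b2 (actW v1 w))))"
    proof (rule tensor_clinear[OF tV])
      fix b1 show "cbilinear (\<lambda>v0 v1. \<beta> (actV b1 v0) (actW b2 (actW v1 w)))"
        by (intro cbilinearI clinear_comp[OF cbilinearD1[OF b]] clinear_comp[OF cbilinearD2[OF b]]
          mod_lin2[OF mV] clinear_comp[OF mod_lin2[OF mW]] mod_lin1[OF mW])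
    next
      fix x y show "clinear (\<lambda>b1. \<beta> (actV b1 x) (actW b2 (actW y w)))"
        by (intro clinear_comp[OF cbilinearD1[OF b]] mod_lin1[OF mV])
    qed
  next
    fix b1
    show "clinear (\<lambda>b2. \<delta>V v (\<lambda>v0 v1. \<beta> (actV b1 v0) (actW b2 (actW v1 w))))"
    proof (rule tensor_clinear[OF tV])
      fix b2 show "cbilinear (\<lambda>v0 v1. \<beta> (actV b1 v0) (actW b2 (actW v1 w)))"
        by (intro cbilinearI clinear_comp[OF cbilinearD1[OF b]] clinear_comp[OF cbilinearD2[OF b]]
          mod_lin2[OF mV] clinear_comp[OF mod_lin2[OF mW]] mod_lin1[OF mW])
    next
      fix x y show "clinear (\<lambda>b2. \<beta> (actV b1 x) (actW b2 (actW y w)))"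
        by (intro clinear_comp[OF cbilinearD2[OF b]] mod_lin1[OF mW])
    qed
  qed
  have pw: "\<delta>V (actV b v) (\<lambda>v0 v1. \<beta> v0 (actW v1 w))
      = \<delta>B b (\<lambda>b1 b2. \<delta>V v (\<lambda>v0 v1. \<beta> (actV b1 v0) (actW b2 (actW v1 w))))" for v w
  proof -
    have bb: "cbilinear (\<lambda>v0 a. \<beta> v0 (actW a w))"
      by (intro cbilinearI cbilinearD1[OF b] clinear_comp[OF cbilinearD2[OF b]] mod_lin1[OF mW])
    show ?thesis using compat bb unfolding mod_comod_compat_def by (simp add: mod_mult[OF mW])
  qed
  show ?thesis
    unfolding pw by (rule tensor_fubini[OF tB t F1 F2, symmetric])
qed

lemma colin_step:
  assumes cmV: "comodule \<Delta> \<epsilon> \<delta>V" and cmW: "comodule \<Delta>C \<epsilon>C \<delta>W" and mW: "alg_module actW"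
    and compatW: "mod_comod_compat \<Delta> actC actW \<delta>W"
    and aC1: "\<And>w. clinear (\<lambda>a. actC a w)" and aC2: "\<And>a. clinear (actC a)"
    and g: "ctrilinear \<gamma>"
  shows "\<delta>V v (\<lambda>v0 v1. \<delta>W (actW v1 w) (\<lambda>w0 w1. \<gamma> v0 w0 w1))
       = \<delta>V v (\<lambda>v0 v1. \<delta>W w (\<lambda>w0 w1. \<delta>V v0 (\<lambda>p q. \<gamma> p (actW q w0) (actC v1 w1))))"
proof -
  have tV: "is_tensor (\<delta>V x)" for x by (rule comod_tensor[OF cmV])
  have tW: "is_tensor (\<delta>W x)" for x by (rule comod_tensor[OF cmW])
  have Bb: "cbilinear (\<lambda>w0 w1. \<gamma> x (actW a1 w0) (actC a2 w1))" for x a1 a2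
    by (intro cbilinearI clinear_comp[OF ctriD2[OF g]] clinear_comp[OF ctriD3[OF g]] mod_lin2[OF mW] aC2)
  have Pb: "cbilinear (\<lambda>p q. \<gamma> p (actW q w0) (actC a2 w1))" for w0 a2 w1
    by (intro cbilinearI ctriD1[OF g] clinear_comp[OF ctriD2[OF g]] mod_lin1[OF mW])
  have "\<delta>V v (\<lambda>v0 v1. \<delta>W (actW v1 w) (\<lambda>w0 w1. \<gamma> v0 w0 w1))
      = \<delta>V v (\<lambda>v0 v1. \<Delta> v1 (\<lambda>a1 a2. \<delta>W w (\<lambda>w0 w1. \<gamma> v0 (actW a1 w0) (actC a2 w1))))"
  proof -
    have "\<delta>W (actW v1 w) (\<lambda>w0 w1. \<gamma> v0 w0 w1) = \<Delta> v1 (\<lambda>a1 a2. \<delta>W w (\<lambda>w0 w1. \<gamma> v0 (actW a1 w0) (actC a2 w1)))" for v0 v1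
    proof -
      have bb: "cbilinear (\<lambda>w0 w1. \<gamma> v0 w0 w1)"
        by (intro cbilinearI ctriD2[OF g] ctriD3[OF g])
      show ?thesis using compatW bb unfolding mod_comod_compat_def by simp
    qed
    then show ?thesis by simp
  qed
  also have "\<dots> = \<delta>V v (\<lambda>v0 v1. \<delta>V v0 (\<lambda>p q. \<delta>W w (\<lambda>w0 w1. \<gamma> p (actW q w0) (actC v1 w1))))"
  proof -
    have tri: "ctrilinear (\<lambda>x a1 a2. \<delta>W w (\<lambda>w0 w1. \<gamma> x (actW a1 w0) (actC a2 w1)))"
    proof (rule ctrilinearI)
      fix a1 a2 show "clinear (\<lambda>x. \<delta>W w (\<lambda>w0 w1. \<gamma> x (actW a1 w0) (actC a2 w1)))"
        by (rule tensor_clinear[OF tW Bb]) (rule ctriD1[OF g])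
    next
      fix x a2 show "clinear (\<lambda>a1. \<delta>W w (\<lambda>w0 w1. \<gamma> x (actW a1 w0) (actC a2 w1)))"
        by (rule tensor_clinear[OF tW Bb]) (intro clinear_comp[OF ctriD2[OF g]] mod_lin1[OF mW])
    next
      fix x a1 show "clinear (\<lambda>a2. \<delta>W w (\<lambda>w0 w1. \<gamma> x (actW a1 w0) (actC a2 w1)))"
        by (rule tensor_clinear[OF tW Bb]) (intro clinear_comp[OF ctriD3[OF g]] aC1)
    qed
    show ?thesis using comod_coassoc[OF cmV tri, of v] by simp
  qed
  also have "\<dots> = \<delta>V v (\<lambda>v0 v1. \<delta>W w (\<lambda>w0 w1. \<delta>V v0 (\<lambda>p q. \<gamma> p (actW q w0) (actC v1 w1))))"
  proof -
    have "\<delta>V v0 (\<lambda>p q. \<delta>W w (\<lambda>w0 w1. \<gamma> p (actW q w0) (actC v1 w1)))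
        = \<delta>W w (\<lambda>w0 w1. \<delta>V v0 (\<lambda>p q. \<gamma> p (actW q w0) (actC v1 w1)))" for v0 v1
      by (rule tensor_fubini[OF tV tW Bb Pb])
    then show ?thesis by simp
  qed
  finally show ?thesis .
qed



theorem mainTheorem7:
  fixes \<Delta> :: "'a::calg \<Rightarrow> ('a, 'a) tens" and \<epsilon> :: "'a \<Rightarrow> complex"
    and S :: "'a \<Rightarrow> 'a" and st :: "'a \<Rightarrow> 'a"
    and \<iota> :: "'b::calg \<Rightarrow> 'a" and stB :: "'b \<Rightarrow> 'b" and \<delta>B :: "'b \<Rightarrow> ('b, 'a) tens"
    and \<pi> :: "'a \<Rightarrow> 'c::cvec" and \<Delta>C :: "'c \<Rightarrow> ('c, 'c) tens" and \<epsilon>C :: "'c \<Rightarrow> complex"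
    and actC :: "'a \<Rightarrow> 'c \<Rightarrow> 'c" and dagC :: "'c \<Rightarrow> 'c"
    and ipV :: "'v::cvec \<Rightarrow> 'v \<Rightarrow> complex" and actV :: "'b \<Rightarrow> 'v \<Rightarrow> 'v"
    and \<delta>V :: "'v \<Rightarrow> ('v, 'a) tens"
    and ipW :: "'w::cvec \<Rightarrow> 'w \<Rightarrow> complex" and actW :: "'a \<Rightarrow> 'w \<Rightarrow> 'w"
    and \<delta>W :: "'w \<Rightarrow> ('w, 'c) tens"
  assumes A: "cqg_hopf_star_algebra \<Delta> \<epsilon> S st"
    and B: "right_coideal_star_subalg \<Delta> st \<iota> stB \<delta>B"
    and C: "quotient_coalgebra \<Delta> \<epsilon> S st \<iota> \<pi> \<Delta>C \<epsilon>C actC dagC"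
    and V: "B_Rep_A \<Delta> \<epsilon> S st stB \<delta>B ipV actV \<delta>V"
    and W: "A_Rep_C \<Delta> st \<Delta>C \<epsilon>C actC dagC ipW actW \<delta>W"
  shows "\<exists>U. unitary_iso (tens_ip ipV ipW)
                (indL_act actV) (indL_coact \<delta>V \<delta>W actC)
                (indR_act \<delta>B actV actW) (indR_coact \<delta>W) U"
proof -
  have hA: "hopf_star_algebra \<Delta> \<epsilon> S st" using A by (simp add: cqg_hopf_star_algebra_def)
  have Sl: "clinear S" using hA by (simp add: hopf_star_algebra_def)
  have si: "star_involution st" using hA by (simp add: hopf_star_algebra_def)
  have ant1: "\<forall>x \<psi>. clinear (\<psi> :: 'a \<Rightarrow> complex) \<longrightarrow> \<Delta> x (\<lambda>x1 x2. \<psi> (S x1 * x2)) = \<epsilon> x * \<psi> 1"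
    using hA unfolding hopf_star_algebra_def by blast
  have ant2: "\<forall>x \<psi>. clinear (\<psi> :: 'a \<Rightarrow> complex) \<longrightarrow> \<Delta> x (\<lambda>x1 x2. \<psi> (x1 * S x2)) = \<epsilon> x * \<psi> 1"
    using hA unfolding hopf_star_algebra_def by blast
  have tB: "is_tensor (\<delta>B b)" for b using B by (simp add: right_coideal_star_subalg_def)
  have pic: "clinear \<pi>" and pis: "surj \<pi>" and piact: "\<And>a x. actC a (\<pi> x) = \<pi> (a * x)"
    using C by (simp_all add: quotient_coalgebra_def)
  have pV: "pre_hilbert ipV" and mV: "alg_module actV" and cmV: "comodule \<Delta> \<epsilon> \<delta>V"
    and compV: "mod_comod_compat \<delta>B (\<lambda>a y. a * y) actV \<delta>V"
    and rcV: "rep_compat stB (\<lambda>a. st (S a)) ipV actV \<delta>V"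
    using V by (simp_all add: B_Rep_A_def)
  have pW: "pre_hilbert ipW" and mW: "alg_module actW" and cmW: "comodule \<Delta>C \<epsilon>C \<delta>W"
    and compW: "mod_comod_compat \<Delta> actC actW \<delta>W"
    and rcW: "rep_compat st dagC ipW actW \<delta>W"
    using W by (simp_all add: A_Rep_C_def)
  have rcV2: "\<forall>v w \<psi>. clinear (\<psi> :: 'a \<Rightarrow> complex) \<longrightarrow>
        \<delta>V w (\<lambda>w0 w1. ipV v w0 * \<psi> w1) = cnj (\<delta>V v (\<lambda>v0 v1. cnj (ipV v0 w * \<psi> (st (S v1)))))"
    using rcV unfolding rep_compat_def by blast
  have rcW1: "\<forall>x v w. ipW v (actW x w) = ipW (actW (st x) v) w"
    using rcW unfolding rep_compat_def by blast
  have aC1: "clinear (\<lambda>a. actC a c)" for c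
  proof -
    obtain x where x: "c = \<pi> x" using pis by (metis surjD)
    have "(\<lambda>a. actC a c) = (\<lambda>a. \<pi> (a * x))" using x piact by simp
    then show ?thesis using clinear_comp[OF pic mult_lin1] by simp
  qed
  have aC2: "clinear (actC a)" for a
  proof (rule clinearI)
    fix c1 c2
    obtain x1 where x1: "c1 = \<pi> x1" using pis by (metis surjD)
    obtain x2 where x2: "c2 = \<pi> x2" using pis by (metis surjD)
    have "c1 + c2 = \<pi> (x1 + x2)" using x1 x2 clinearD1[OF pic] by simp
    then have "actC a (c1 + c2) = \<pi> (a * (x1 + x2))" using piact by simp
    also have "\<dots> = \<pi> (a * x1) + \<pi> (a * x2)" by (simp add: distrib_left clinearD1[OF pic])
    finally show "actC a (c1 + c2) = actC a c1 + actC a c2"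
      using x1 x2 piact by simp
  next
    fix k c
    obtain x where x: "c = \<pi> x" using pis by (metis surjD)
    have "cscale k c = \<pi> (cscale k x)" using x clinearD2[OF pic] by simp
    then have "actC a (cscale k c) = \<pi> (a * cscale k x)" using piact by simp
    also have "\<dots> = cscale k (\<pi> (a * x))" by (simp add: cscale_mult_right[symmetric] clinearD2[OF pic])
    finally show "actC a (cscale k c) = cscale k (actC a c)"
      using x piact by simp
  qed
  have tl: "tlinear \<delta>V" by (rule comod_tlinear[OF cmV])
  have hS1: "clinear (\<lambda>a. actW (S a) w)" for w by (rule clinear_comp[OF mod_lin1[OF mW] Sl])
  have hS2: "clinear (actW (S a))" for a by (rule mod_lin2[OF mW])
  define U where "U = (\<lambda>(t :: ('v, 'w) tens) \<beta>. t (\<lambda>v w. \<delta>V v (\<lambda>v0 v1. \<beta> v0 (actW v1 w))))"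
  define U' where "U' = (\<lambda>(t :: ('v, 'w) tens) \<beta>. t (\<lambda>v w. \<delta>V v (\<lambda>v0 v1. \<beta> v0 (actW (S v1) w))))"
  have Ut: "is_tensor t \<Longrightarrow> is_tensor (U t)" for t
    unfolding U_def by (rule G_tensor[OF tl _ mod_lin1[OF mW] mod_lin2[OF mW]])
  have U't: "is_tensor t \<Longrightarrow> is_tensor (U' t)" for t
    unfolding U'_def by (rule G_tensor[OF tl _ hS1 hS2])
  have gb: "cbilinear \<beta> \<Longrightarrow> cbilinear (\<lambda>v w. \<delta>V v (\<lambda>v0 v1. \<beta> v0 (actW v1 w)))" for \<beta>
    by (rule G_bilin[OF tl _ mod_lin1[OF mW] mod_lin2[OF mW]])
  have gb': "cbilinear \<beta> \<Longrightarrow> cbilinear (\<lambda>v w. \<delta>V v (\<lambda>v0 v1. \<beta> v0 (actW (S v1) w)))" for \<beta>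
    by (rule G_bilin[OF tl _ hS1 hS2])
  have UU': "cbilinear \<beta> \<Longrightarrow> U' (U t) \<beta> = t \<beta>" for t \<beta>
    unfolding U_def U'_def using inv1[OF cmV mW Sl ant1] by simp
  have U'U: "cbilinear \<beta> \<Longrightarrow> U (U' t) \<beta> = t \<beta>" for t \<beta>
    unfolding U_def U'_def using inv2[OF cmV mW Sl ant2] by simp
  show ?thesis
  proof (rule exI[of _ U], unfold unitary_iso_def, intro conjI allI impI)
    fix t :: "('v, 'w) tens" assume "is_tensor t" then show "is_tensor (U t)" by (rule Ut)
  next
    fix t s :: "('v, 'w) tens" assume "teq t s"
    then show "teq (U t) (U s)" unfolding teq_def U_def using gb by blast
  next
    fix t s :: "('v, 'w) tens"
    show "teq (U (tadd t s)) (tadd (U t) (U s))" by (simp add: teq_def tadd_def U_def)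
  next
    fix c and t :: "('v, 'w) tens"
    show "teq (U (tscale c t)) (tscale c (U t))" by (simp add: teq_def tscale_def U_def)
  next
    fix t s :: "('v, 'w) tens" assume e: "teq (U t) (U s)"
    show "teq t s" unfolding teq_def
    proof (intro allI impI)
      fix \<beta> :: "'v \<Rightarrow> 'w \<Rightarrow> complex" assume b: "cbilinear \<beta>"
      have "t \<beta> = U' (U t) \<beta>" using UU'[OF b] by simp
      also have "\<dots> = U' (U s) \<beta>" unfolding U'_def using e gb'[OF b] unfolding teq_def by blast
      also have "\<dots> = s \<beta>" using UU'[OF b] by simp
      finally show "t \<beta> = s \<beta>" .
    qed
  next
    fix s :: "('v, 'w) tens" assume s: "is_tensor s"
    show "\<exists>t. is_tensor t \<and> teq (U t) s"
      by (rule exI[of _ "U' s"]) (simp add: U't[OF s] teq_def U'U)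
  next
    fix t s :: "('v, 'w) tens" assume t: "is_tensor t" and s: "is_tensor s"
    have e: "(\<lambda>v w. \<delta>V v (\<lambda>v0 v1. cnj (s (\<lambda>v' w'. \<delta>V v' (\<lambda>p q. ipV v0 p * ipW (actW v1 w) (actW q w'))))))
        = (\<lambda>v w. cnj (s (\<lambda>v' w'. ipV v v' * ipW w w')))"
      using ip_step[OF cmV rcV2 pV pW mW rcW1 Sl si ant1 s] by (intro ext) simp
    show "tens_ip ipV ipW (U t) (U s) = tens_ip ipV ipW t s"
      unfolding tens_ip_def U_def using e by simp
  next
    fix b and t :: "('v, 'w) tens" assume t: "is_tensor t"
    show "teq (U (indL_act actV b t)) (indR_act \<delta>B actV actW b (U t))"
      unfolding teq_def U_def indL_act_def indR_act_def
      using blin_step[OF cmV mV mW compV tB t] by simp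
  next
    fix t :: "('v, 'w) tens" assume t: "is_tensor t"
    show "teq3 (indR_coact \<delta>W (U t))
            (\<lambda>\<gamma>. indL_coact \<delta>V \<delta>W actC t (\<lambda>v w c. U (tens v w) (\<lambda>v' w'. \<gamma> v' w' c)))"
      unfolding teq3_def U_def indR_coact_def indL_coact_def tens_def
      using colin_step[OF cmV cmW mW compW aC1 aC2] by simp
  qed
qed


end
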